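(* Let $N>0$, $\beta>0$, $0<\rho<1$, $\sigma>0$, $\gamma>0$ and $0\le\pi_1\le\pi_2\le 1$ be constants, and let $\Delta_1,\Delta_2:[0,\infty)\to[0,\infty)$ be continuous with $\Delta_i(t)\to0$ as $t\to+\infty$ and $\overline{\Delta}_i:=\int_0^\infty\Delta_i(t)\,dt\le N$ ($i=1,2$). Write $q(t)=\Delta_1(t)\pi_1+\Delta_2(t)(\pi_2-\pi_1)$ and consider $$S'=-\tfrac{\beta}{N}S(1-\rho)I-\tfrac{S}{N}q(t),\quad E'=\tfrac{\beta}{N}S(1-\rho)I-\sigma E,\quad I'=\sigma E-\gamma I,\quad R'=\gamma I,\quad V'=\tfrac{S}{N}q(t),$$ with initial data $S_0>0$, $E_0,I_0,R_0,V_0\ge 0$, $S_0+E_0+I_0+R_0+V_0=N$. Let $(S_\infty,0,0,N-S_\infty-V_\infty,V_\infty)$ be the limit of the solution as $t\to+\infty$. Then $$\frac{\beta(1-\rho)}{\gamma N}S_\infty-\log S_\infty+\frac{\beta(1-\rho)}{\gamma N}V_\infty=\frac{1}{N}\big(\pi_1\overline{\Delta}_1+(\pi_2-\pi_1)\overline{\Delta}_2\big)+\frac{\beta(1-\rho)}{\gamma N}(N-R_0)-\log S_0.$$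
   Context: SEIR epidemic model with vaccination in a population of constant size $N$; $R_0$ denotes the initial value of the removed compartment $R$ (not a reproductive number). The solution converges as $t\to\infty$ to a point of the form $(S_\infty,0,0,N-S_\infty-V_\infty,V_\infty)$. *)

theory Defs
  imports "HOL-Analysis.Analysis"
begin

end

theory Submission
  imports Defs
begin
lemma tend_int:
  fixes h :: "real \<Rightarrow> real"
  assumes h: "h integrable_on {0..}" and nn: "\<And>t. t \<ge> 0 \<Longrightarrow> h t \<ge> 0"
  shows "((\<lambda>b. integral {0..b} h) \<longlongrightarrow> integral {0..} h) at_top"
proof -
  have ai: "set_integrable lebesgue {0..} h"
    using nonnegative_absolutely_integrable_1[OF h] nn by auto
  have L: "((\<lambda>b. set_lebesgue_integral lebesgue {0..b} h) \<longlongrightarrow> set_lebesgue_integral lebesgue {0..} h) at_top"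
    by (rule tendsto_set_lebesgue_integral_at_top[OF _ ai]) auto
  have e1: "set_lebesgue_integral lebesgue {0..} h = integral {0..} h"
    using set_lebesgue_integral_eq_integral(2)[OF ai] .
  have "\<forall>\<^sub>F b in at_top. set_lebesgue_integral lebesgue {0..b} h = integral {0..b} h"
  proof (rule eventually_at_top_linorderI[of 0])
    fix b :: real assume "b \<ge> 0"
    have "set_integrable lebesgue {0..b} h"
      by (rule set_integrable_subset[OF ai]) auto
    then show "set_lebesgue_integral lebesgue {0..b} h = integral {0..b} h"
      using set_lebesgue_integral_eq_integral(2) by blast
  qed
  from tendsto_cong[OF this] L e1 show ?thesis by simp
qed

theorem mainTheorem3:
  fixes N \<beta> \<rho> \<sigma> \<gamma> \<pi>1 \<pi>2 :: real
    and \<Delta>1 \<Delta>2 :: "real \<Rightarrow> real"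
    and S E I R V :: "real \<Rightarrow> real"
    and S0 E0 I0 R0 V0 S_inf V_inf :: real
  assumes N: "N > 0" and beta: "\<beta> > 0" and rho: "0 < \<rho>" "\<rho> < 1"
    and sigma: "\<sigma> > 0" and gamma: "\<gamma> > 0"
    and pi: "0 \<le> \<pi>1" "\<pi>1 \<le> \<pi>2" "\<pi>2 \<le> 1"
    and D1_cont: "continuous_on {0..} \<Delta>1" and D2_cont: "continuous_on {0..} \<Delta>2"
    and D1_nn: "\<And>t. t \<ge> 0 \<Longrightarrow> \<Delta>1 t \<ge> 0"
    and D2_nn: "\<And>t. t \<ge> 0 \<Longrightarrow> \<Delta>2 t \<ge> 0"
    and D1_lim: "(\<Delta>1 \<longlongrightarrow> 0) at_top" and D2_lim: "(\<Delta>2 \<longlongrightarrow> 0) at_top"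
    and D1_int: "\<Delta>1 integrable_on {0..}" and D2_int: "\<Delta>2 integrable_on {0..}"
    and D1_bd: "integral {0..} \<Delta>1 \<le> N" and D2_bd: "integral {0..} \<Delta>2 \<le> N"
    and dS: "\<And>t. t \<ge> 0 \<Longrightarrow> (S has_real_derivative
               (- \<beta> / N * S t * (1 - \<rho>) * I t
                - S t / N * (\<Delta>1 t * \<pi>1 + \<Delta>2 t * (\<pi>2 - \<pi>1)))) (at t within {0..})"
    and dE: "\<And>t. t \<ge> 0 \<Longrightarrow> (E has_real_derivative
               (\<beta> / N * S t * (1 - \<rho>) * I t - \<sigma> * E t)) (at t within {0..})"
    and dI: "\<And>t. t \<ge> 0 \<Longrightarrow> (I has_real_derivative (\<sigma> * E t - \<gamma> * I t)) (at t within {0..})"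
    and dR: "\<And>t. t \<ge> 0 \<Longrightarrow> (R has_real_derivative (\<gamma> * I t)) (at t within {0..})"
    and dV: "\<And>t. t \<ge> 0 \<Longrightarrow> (V has_real_derivative
               (S t / N * (\<Delta>1 t * \<pi>1 + \<Delta>2 t * (\<pi>2 - \<pi>1)))) (at t within {0..})"
    and init: "S 0 = S0" "E 0 = E0" "I 0 = I0" "R 0 = R0" "V 0 = V0"
    and init_pos: "S0 > 0" "E0 \<ge> 0" "I0 \<ge> 0" "R0 \<ge> 0" "V0 \<ge> 0"
    and init_sum: "S0 + E0 + I0 + R0 + V0 = N"
    and limS: "(S \<longlongrightarrow> S_inf) at_top" and limE: "(E \<longlongrightarrow> 0) at_top"
    and limI: "(I \<longlongrightarrow> 0) at_top" and limR: "(R \<longlongrightarrow> N - S_inf - V_inf) at_top"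
    and limV: "(V \<longlongrightarrow> V_inf) at_top"
  shows "\<beta> * (1 - \<rho>) / (\<gamma> * N) * S_inf - ln S_inf + \<beta> * (1 - \<rho>) / (\<gamma> * N) * V_inf
         = 1 / N * (\<pi>1 * integral {0..} \<Delta>1 + (\<pi>2 - \<pi>1) * integral {0..} \<Delta>2)
           + \<beta> * (1 - \<rho>) / (\<gamma> * N) * (N - R0) - ln S0"
proof -
  define q where "q = (\<lambda>t. \<Delta>1 t * \<pi>1 + \<Delta>2 t * (\<pi>2 - \<pi>1))"
  define k where "k = \<beta> * (1 - \<rho>) / (\<gamma> * N)"
  define G where "G = (\<lambda>b. integral {0..b} q)"
  define F where "F = (\<lambda>t. S t * exp (k * R t + G t / N))"
  have qc: "continuous_on {0..} q" unfolding q_def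
    by (intro continuous_intros D1_cont D2_cont)
  have qnn: "\<And>t. t \<ge> 0 \<Longrightarrow> q t \<ge> 0" unfolding q_def
    using D1_nn D2_nn pi by (simp add: mult_nonneg_nonneg)
  have qi: "q integrable_on {0..}" unfolding q_def
    using D1_int D2_int by (intro integrable_add integrable_on_mult_left) auto
  have qI: "integral {0..} q = \<pi>1 * integral {0..} \<Delta>1 + (\<pi>2 - \<pi>1) * integral {0..} \<Delta>2"
  proof -
    have "integral {0..} q = integral {0..} (\<lambda>t. \<Delta>1 t * \<pi>1) + integral {0..} (\<lambda>t. \<Delta>2 t * (\<pi>2 - \<pi>1))"
      unfolding q_def by (rule integral_add) (intro integrable_on_mult_left D1_int D2_int)+
    also have "\<dots> = integral {0..} \<Delta>1 * \<pi>1 + integral {0..} \<Delta>2 * (\<pi>2 - \<pi>1)"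
      by (simp only: integral_mult_left)
    finally show ?thesis by (simp add: mult.commute)
  qed
  have Glim: "(G \<longlongrightarrow> integral {0..} q) at_top"
    unfolding G_def by (rule tend_int[OF qi qnn])
  have Fconst: "F t = F 0" if t: "t \<ge> 0" for t
  proof -
    have "\<exists>c. \<forall>x\<in>{0..t}. F x = c"
    proof (rule has_field_derivative_zero_constant)
      fix x assume x: "x \<in> {0..t}"
      have sub: "{0..t} \<subseteq> {0::real..}" by auto
      have x0: "x \<ge> 0" using x by auto
      have qct: "continuous_on {0..t} q" using continuous_on_subset[OF qc sub] .
      have dG: "(G has_real_derivative q x) (at x within {0..t})"
        unfolding G_def by (rule integral_has_real_derivative[OF qct x])
      have dS': "(S has_real_derivative (- \<beta> / N * S x * (1 - \<rho>) * I x - S x / N * q x)) (at x within {0..t})"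
        using has_field_derivative_subset[OF dS[OF x0] sub] unfolding q_def .
      have dR': "(R has_real_derivative (\<gamma> * I x)) (at x within {0..t})"
        using has_field_derivative_subset[OF dR[OF x0] sub] .
      have "(F has_real_derivative
          ((- \<beta> / N * S x * (1 - \<rho>) * I x - S x / N * q x) * exp (k * R x + G x / N)
           + S x * (exp (k * R x + G x / N) * (k * (\<gamma> * I x) + q x / N)))) (at x within {0..t})"
      proof -
        have dA: "((\<lambda>x. k * R x + G x / N) has_real_derivative (k * (\<gamma> * I x) + q x / N)) (at x within {0..t})"
          by (rule DERIV_add[OF DERIV_cmult[OF dR'] DERIV_cdivide[OF dG]])
        have dB: "((\<lambda>x. exp (k * R x + G x / N)) has_real_derivative exp (k * R x + G x / N) * (k * (\<gamma> * I x) + q x / N)) (at x within {0..t})"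
          using DERIV_chain2[OF DERIV_exp dA] by simp
        show ?thesis unfolding F_def using DERIV_mult[OF dS' dB] by (simp add: mult.commute)
      qed
      moreover have "(- \<beta> / N * S x * (1 - \<rho>) * I x - S x / N * q x) * exp (k * R x + G x / N)
           + S x * (exp (k * R x + G x / N) * (k * (\<gamma> * I x) + q x / N)) = 0"
        unfolding k_def using N gamma by (simp add: field_simps)
      ultimately show "(F has_real_derivative 0) (at x within {0..t})" by simp
    qed auto
    then obtain c where "\<forall>x\<in>{0..t}. F x = c" by blast
    then show ?thesis using t by auto
  qed
  have G0: "G 0 = 0" unfolding G_def by simp
  have F0: "F 0 = S0 * exp (k * R0)" unfolding F_def using G0 init by simp
  have Flim: "(F \<longlongrightarrow> S_inf * exp (k * (N - S_inf - V_inf) + integral {0..} q / N)) at_top"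
    unfolding F_def by (intro tendsto_intros limS limR Glim) (use N in auto)
  have Fev: "\<forall>\<^sub>F t in at_top. F t = S0 * exp (k * R0)"
    using Fconst F0 by (intro eventually_at_top_linorderI[of 0]) auto
  have "((\<lambda>t::real. S0 * exp (k * R0)) \<longlongrightarrow> S_inf * exp (k * (N - S_inf - V_inf) + integral {0..} q / N)) at_top"
    by (rule Lim_transform_eventually[OF Flim Fev])
  then have eq: "S_inf * exp (k * (N - S_inf - V_inf) + integral {0..} q / N) = S0 * exp (k * R0)"
    by (simp add: tendsto_const_iff)
  define Q where "Q = integral {0..} q"
  have Sinf: "S_inf = S0 * exp (k * R0 - (k * (N - S_inf - V_inf) + Q / N))"
  proof -
    have "S_inf = S0 * exp (k * R0) / exp (k * (N - S_inf - V_inf) + Q / N)"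
      using eq unfolding Q_def by (simp add: eq_divide_eq)
    then show ?thesis by (simp add: exp_diff)
  qed
  have "ln S_inf = ln S0 + (k * R0 - (k * (N - S_inf - V_inf) + Q / N))"
    by (subst Sinf) (use init_pos in \<open>simp add: ln_mult\<close>)
  then show ?thesis unfolding qI[symmetric] Q_def[symmetric] k_def[symmetric]
    by (simp add: field_simps)
qed

end
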